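(* Let $p$ be an odd prime, $m\ge3$ odd, $k\ge1$ even with $\gcd(m,k)=1$, and $\lambda$ a fixed nonsquare in $\mathbb{F}_p$. For every $(a,b,c)\in\mathbb{F}_{p^m}^3$, $S(a,b,c)$ lies in the set $\{0,\ (p-1)p^m,\ 2(p-1)p^m,\ \pm(p-1)p^{\frac{m+1}{2}},\ \pm2(p-1)p^{\frac{m+1}{2}}\}$.
   Context: $\mathrm{Tr}$ is the trace from $\mathbb{F}_{p^m}$ to $\mathbb{F}_p$ and $\zeta_p=e^{2\pi i/p}$. $S(a,b,c)=\sum_{y\in\mathbb{F}_p^*}\sum_{x\in\mathbb{F}_{p^m}}\big(\zeta_p^{y\,\mathrm{Tr}((a+b)x^2+cx^{p^k+1})}+\zeta_p^{y\,\mathrm{Tr}((a-b)\lambda x^2+c\lambda x^{p^k+1})}\big)$. *)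

theory Defs
  imports Complex_Main "HOL-Number_Theory.Number_Theory"
begin

text \<open>The field F_{p^m} is modelled as an arbitrary finite field type 'a with
  card UNIV = p^m (all such fields are isomorphic).\<close>

definition tr :: "nat \<Rightarrow> nat \<Rightarrow> 'a::field \<Rightarrow> 'a" where
  "tr p m x = (\<Sum>i<m. x ^ (p ^ i))"

definition fp_val :: "nat \<Rightarrow> 'a::field \<Rightarrow> nat" where
  "fp_val p z = (THE j. j < p \<and> of_nat j = z)"

definition chi :: "nat \<Rightarrow> nat \<Rightarrow> nat \<Rightarrow> 'a::field \<Rightarrow> complex" where
  "chi p m y z = exp (2 * pi * \<i> * of_nat (y * fp_val p (tr p m z)) / of_nat p)"

definition S_sum :: "nat \<Rightarrow> nat \<Rightarrow> nat \<Rightarrow> int \<Rightarrow> 'a::{field,finite} \<Rightarrow> 'a \<Rightarrow> 'a \<Rightarrow> complex" where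
  "S_sum p m k lam a b c =
     (\<Sum>y\<in>{1..<p}. \<Sum>x\<in>(UNIV::'a set).
        chi p m y ((a + b) * x^2 + c * x ^ (p^k + 1))
      + chi p m y ((a - b) * of_int lam * x^2 + c * of_int lam * x ^ (p^k + 1)))"

end

theory Submission
  imports Defs "HOL-Analysis.Analysis" "HOL-Computational_Algebra.Polynomial"
begin
locale ffp =
  fixes p m :: nat and ty :: "'a::{field,finite} itself"
  assumes p_prime: "prime p" and p_odd: "odd p" and card_eq: "card (UNIV::'a set) = p^m"
    and m_pos: "m \<ge> 1"
begin

lemma char_eq: "CHAR('a) = p"
proof -
  have fin: "finite (UNIV::'a set)" by simp
  have pos: "CHAR('a) > 0" using finite_imp_CHAR_pos[OF fin] .
  have pr: "prime CHAR('a)" using prime_CHAR_semidom[OF pos] .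
  have "CHAR('a) dvd p^m" using CHAR_dvd_CARD[where 'a='a] card_eq by simp
  hence "CHAR('a) dvd p" using pr prime_dvd_power by blast
  thus ?thesis using pr p_prime primes_dvd_imp_eq by blast
qed

lemma p_ge3: "p \<ge> 3"
  using p_prime p_odd prime_ge_2_nat[of p] by (cases "p = 2") auto

lemma of_nat_eq0: "(of_nat n :: 'a) = 0 \<longleftrightarrow> p dvd n"
  using of_nat_eq_0_iff_char_dvd[where 'a='a] char_eq by simp

lemma of_int_eq0: "(of_int n :: 'a) = 0 \<longleftrightarrow> int p dvd n"
  using of_int_eq_0_iff_char_dvd[where 'a='a] char_eq by simp

lemma of_nat_p [simp]: "(of_nat p :: 'a) = 0"
  using of_nat_eq0 by simp

lemma two_ne0: "(2::'a) \<noteq> 0"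
proof
  assume "(2::'a) = 0"
  hence "(of_nat 2::'a) = 0" by simp
  hence "p dvd 2" using of_nat_eq0 by blast
  hence "p \<le> 2" by (rule dvd_imp_le) simp
  thus False using p_ge3 by simp
qed

lemma frob: "((x::'a) + y) ^ (p^i) = x^(p^i) + y^(p^i)"
  using freshmans_dream'[of "p^i" i x y] char_eq p_prime by simp

lemma frob1: "((x::'a) + y) ^ p = x^p + y^p"
  using frob[of x y 1] by simp

lemma frob_sum: "(\<Sum>i\<in>A. (f i::'a)) ^ (p^j) = (\<Sum>i\<in>A. f i ^ (p^j))"
  using p_prime by (induction A rule: infinite_finite_induct) (auto simp: frob prime_gt_0_nat)

lemma frob_neg: "(- (x::'a)) ^ (p^j) = - (x ^ (p^j))"
proof -
  have "(x + - x)^(p^j) = x^(p^j) + (-x)^(p^j)" by (rule frob)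
  moreover have "(0::'a)^(p^j) = 0" using p_prime by (simp add: prime_gt_0_nat)
  ultimately have "x^(p^j) + (-x)^(p^j) = 0" by simp
  thus ?thesis by (simp add: eq_neg_iff_add_eq_0 add.commute)
qed

lemma frob_diff: "((x::'a) - y) ^ (p^j) = x^(p^j) - y^(p^j)"
  using frob[of x "-y" j] frob_neg[of y j] by simp

lemma pow_card: "(x::'a) ^ (p^m) = x"
proof (cases "x = 0")
  case False
  have "x * (\<Prod>y\<in>UNIV-{0}. x * y) = x * x ^ (card (UNIV :: 'a set) - 1) * \<Prod>(UNIV-{0})"
    by (simp add: prod.distrib mult_ac)
  also have "x * x ^ (card (UNIV :: 'a set) - 1) = x ^ Suc (card (UNIV :: 'a set) - 1)"
    by (subst power_Suc) auto
  also have "Suc (card (UNIV :: 'a set) - 1) = card (UNIV :: 'a set)"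
    using finite_UNIV_card_ge_0[where ?'a = 'a] by simp
  also have "(\<Prod>y\<in>UNIV-{0}. x * y) = (\<Prod>y\<in>UNIV-{0}. y)"
    by (rule prod.reindex_bij_witness[of _ "\<lambda>y. y / x" "\<lambda>y. x * y"]) (use False in auto)
  finally show ?thesis using card_eq
    by simp
next
  case True thus ?thesis using p_prime by (simp add: power_0_left)
qed

lemma pow_card_mult: "(x::'a) ^ (p^(m*j)) = x"
  by (induction j) (simp_all add: pow_card power_mult power_add)

lemma pow_pos: "n > 0 \<Longrightarrow> ((x::'a)^n = 0) = (x = 0)"
  by simp

definition PF :: "'a set" where "PF = {z. z^p = z}"

lemma PF_pow: "z \<in> PF \<Longrightarrow> z^(p^i) = z"
  by (induction i) (auto simp: PF_def power_mult)

lemma PF_add: "u \<in> PF \<Longrightarrow> v \<in> PF \<Longrightarrow> u + v \<in> PF"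
  using frob1 by (simp add: PF_def)
lemma PF_neg: "u \<in> PF \<Longrightarrow> - u \<in> PF"
  using frob_neg[of u 1] by (simp add: PF_def)
lemma PF_diff: "u \<in> PF \<Longrightarrow> v \<in> PF \<Longrightarrow> u - v \<in> PF"
  using PF_add PF_neg[of v] by (metis diff_conv_add_uminus)
lemma PF_mult: "u \<in> PF \<Longrightarrow> v \<in> PF \<Longrightarrow> u * v \<in> PF"
  by (simp add: PF_def power_mult_distrib)
lemma PF_inv: "u \<in> PF \<Longrightarrow> inverse u \<in> PF"
  by (simp add: PF_def power_inverse)
lemma PF_div: "u \<in> PF \<Longrightarrow> v \<in> PF \<Longrightarrow> u / v \<in> PF"
  by (simp add: PF_def power_divide)
lemma PF_0[simp]: "0 \<in> PF" and PF_1[simp]: "1 \<in> PF"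
  using p_prime by (auto simp: PF_def prime_gt_0_nat)
lemma PF_of_nat[simp]: "of_nat j \<in> PF"
  by (induction j) (auto intro: PF_add)
lemma PF_of_int[simp]: "of_int j \<in> PF"
proof -
  have "(of_int j::'a) = of_nat (nat j) - of_nat (nat (- j))"
    by (cases "j \<ge> 0") simp_all
  thus ?thesis using PF_diff[OF PF_of_nat PF_of_nat] by simp
qed


lemma PF_sigma:
  assumes "coprime k m" "z^(p^k) = (z::'a)" "m \<ge> 2"
  shows "z \<in> PF"
proof -
  obtain j where j: "[k * j = Suc 0] (mod m)" using cong_solve_coprime_nat[OF assms(1)] by blast
  have it: "z^(p^(k*i)) = z" for i
  proof (induction i)
    case (Suc i)
    have e: "p^(k*Suc i) = p^(k*i) * p^k" by (simp add: power_add mult.commute)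
    have "z^(p^(k*Suc i)) = (z^(p^(k*i)))^(p^k)"
      unfolding e by (rule power_mult)
    thus ?case using Suc assms(2) by simp
  qed simp
  have "k * j mod m = 1" using j assms(3) unfolding Cong.cong_def by simp
  moreover have "k*j = m*(k*j div m) + k*j mod m" by simp
  ultimately have e: "k * j = m * (k*j div m) + 1" by simp
  have "p^(k*j) = p^(m*(k*j div m)) * p" by (subst e) (simp add: power_add)
  hence "z^(p^(k*j)) = (z^(p^(m*(k*j div m))))^p"
    by (simp only: power_mult)
  hence "z^p = z" using it[of j] pow_card_mult by simp
  thus ?thesis by (simp add: PF_def)
qed

lemma of_nat_inj: "inj_on (of_nat :: nat \<Rightarrow> 'a) {..<p}"
proof (rule inj_onI)
  fix x y assume xy: "x \<in> {..<p}" "y \<in> {..<p}" and h: "(of_nat x::'a) = of_nat y"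
  from h have "[x = y] (mod CHAR('a))" by (simp only: of_nat_eq_iff_cong_CHAR)
  hence "[x = y] (mod p)" by (simp only: char_eq)
  thus "x = y" using xy cong_less_modulus_unique_nat by auto
qed

lemma PF_eq: "PF = of_nat ` {..<p}"
proof -
  have sub: "of_nat ` {..<p} \<subseteq> PF" by auto
  have c1: "card (of_nat ` {..<p} :: 'a set) = p" using card_image[OF of_nat_inj] by simp
  define P :: "'a poly" where "P = monom 1 p - monom 1 1"
  have "coeff P p = 1" using p_ge3 by (simp add: P_def coeff_monom)
  hence P0: "P \<noteq> 0" by auto
  have d1: "degree (monom (1::'a) p) \<le> p" by (rule degree_monom_le)
  have d2: "degree (monom (1::'a) 1) \<le> p" using degree_monom_le[of "1::'a" 1] p_ge3 by linarith
  have dP: "degree P \<le> p" unfolding P_def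
    using degree_diff_le_max[of "monom (1::'a) p" "monom 1 1"] d1 d2 by linarith
  have "PF \<subseteq> {x. poly P x = 0}" by (auto simp: PF_def P_def poly_monom)
  hence "card PF \<le> card {x. poly P x = 0}" by (intro card_mono) auto
  also have "\<dots> \<le> p" using card_poly_roots_bound[OF P0] dP by linarith
  finally have "card PF \<le> p" .
  thus ?thesis using card_seteq[OF _ sub] c1 by simp
qed

lemma card_PF: "card PF = p"
  using PF_eq card_image[OF of_nat_inj] by simp

lemma fp_val: assumes "z \<in> PF" shows "fp_val p z < p" "of_nat (fp_val p z) = z"
proof -
  obtain j where j: "j < p" "of_nat j = z" using assms PF_eq by auto
  have "\<exists>!j. j < p \<and> of_nat j = z"
  proof (rule ex1I[of _ j])
    show "j < p \<and> of_nat j = z" using j by simp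
  next
    fix i assume "i < p \<and> of_nat i = z"
    thus "i = j" using j inj_onD[OF of_nat_inj, of i j] by simp
  qed
  from theI'[OF this] show "fp_val p z < p" "of_nat (fp_val p z) = z" by (auto simp: fp_val_def)
qed

lemma fp_val_of_nat: "fp_val p (of_nat j :: 'a) = j mod p"
proof -
  have "(of_nat j :: 'a) = of_nat (j mod p)"
    using of_nat_eq_iff_cong_CHAR[where 'a='a] char_eq by (simp add: Cong.cong_def)
  moreover have "j mod p < p" using p_ge3 by simp
  ultimately have "fp_val p (of_nat j :: 'a) = fp_val p (of_nat (j mod p) :: 'a)" by simp
  also have "\<dots> = j mod p"
  proof -
    have "of_nat (fp_val p (of_nat (j mod p) :: 'a)) = (of_nat (j mod p) :: 'a)"
      "fp_val p (of_nat (j mod p) :: 'a) < p" using fp_val[of "of_nat (j mod p)"] by auto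
    thus ?thesis using inj_onD[OF of_nat_inj, of "fp_val p (of_nat (j mod p) :: 'a)" "j mod p"] \<open>j mod p < p\<close> by simp
  qed
  finally show ?thesis .
qed

definition E :: "nat \<Rightarrow> complex" where "E n = exp (2 * pi * \<i> * of_nat n / of_nat p)"

lemma E_mod: "E (n mod p) = E n"
proof -
  have "(of_nat n :: complex) = of_nat (n mod p + p * (n div p))"
    by (simp only: mod_mult_div_eq)
  hence nn: "(of_nat n :: complex) = of_nat (n mod p) + of_nat p * of_nat (n div p)"
    by (simp only: of_nat_add of_nat_mult)
  have "2 * pi * \<i> * of_nat n / of_nat p = 2 * pi * \<i> * of_nat (n mod p) / of_nat p + (2 * of_nat (n div p) * pi) * \<i>"
    using p_ge3 unfolding nn by (simp add: field_simps)
  hence "E n = E (n mod p) * exp ((2 * of_nat (n div p) * pi) * \<i>)"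
    by (simp add: E_def exp_add)
  also have "exp ((2 * of_nat (n div p) * pi) * \<i>) = 1"
    by (rule exp_integer_2pi) simp
  finally show ?thesis by simp
qed

lemma E_add: "E (a + b) = E a * E b"
  by (simp add: E_def distrib_left add_divide_distrib exp_add)

lemma E_eq1: assumes "n < p" "E n = 1" shows "n = 0"
proof -
  have eq: "2 * pi * \<i> * of_nat n / of_nat p = \<i> * complex_of_real (2 * pi * n / p)"
    by simp
  have "exp (\<i> * complex_of_real (2 * pi * n / p)) = 1" using assms(2) by (simp only: E_def eq)
  hence "\<exists>k::int. 2 * pi * n / p = of_int (2*k) * pi" unfolding exp_eq_1
    by simp
  then obtain k::int where "2 * pi * n / p = of_int (2*k) * pi" by blast
  hence "n / p = of_int k" using p_ge3 by (simp add: field_simps)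
  hence "real n = real_of_int k * p" using p_ge3 by (simp add: field_simps)
  hence "real_of_int (int n) = real_of_int (k * int p)" by simp
  hence kn: "int n = k * int p" by (simp only: of_int_eq_iff)
  have "k * int p < 1 * int p" using kn assms(1) by linarith
  hence "k < 1" by (rule mult_right_less_imp_less) simp
  moreover have "0 \<le> k * int p" using kn by simp
  hence "0 \<le> k" using p_ge3 by (simp add: zero_le_mult_iff)
  ultimately have "k = 0" by simp
  thus ?thesis using kn by simp
qed

definition psi :: "'a \<Rightarrow> complex" where "psi z = E (fp_val p z)"

lemma psi_0[simp]: "psi 0 = 1"
  using fp_val_of_nat[of 0] by (simp add: psi_def E_def)

lemma psi_add: assumes "u \<in> PF" "v \<in> PF" shows "psi (u + v) = psi u * psi v"
proof -
  have "u + v = of_nat (fp_val p u + fp_val p v)" using fp_val(2) assms by simp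
  hence "fp_val p (u + v) = (fp_val p u + fp_val p v) mod p" by (simp only: fp_val_of_nat)
  thus ?thesis by (simp add: psi_def E_mod E_add)
qed

lemma psi_eq1: assumes "v \<in> PF" "psi v = 1" shows "v = 0"
proof -
  have "fp_val p v = 0" using E_eq1 fp_val(1)[OF assms(1)] assms(2) by (simp add: psi_def)
  thus ?thesis using fp_val(2)[OF assms(1)] by simp
qed

lemma chi_psi: assumes "tr p m z \<in> PF" shows "chi p m y z = psi (of_nat y * tr p m z)"
proof -
  have "of_nat y * tr p m z = of_nat (y * fp_val p (tr p m z))" using fp_val(2)[OF assms] by simp
  hence "fp_val p (of_nat y * tr p m z) = (y * fp_val p (tr p m z)) mod p" by (simp only: fp_val_of_nat)
  moreover have "chi p m y z = E (y * fp_val p (tr p m z))" by (simp add: chi_def E_def)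
  ultimately show ?thesis by (simp add: psi_def E_mod)
qed

lemma sum_psi: assumes "v \<in> PF" shows "(\<Sum>w\<in>PF. psi (w * v)) = (if v = 0 then of_nat p else 0)"
proof (cases "v = 0")
  case True thus ?thesis using card_PF by simp
next
  case False
  have bij: "bij_betw (\<lambda>w. w + 1) PF PF"
  proof -
    have "inj_on (\<lambda>w. w + 1) PF" by (auto simp: inj_on_def)
    moreover have "(\<lambda>w. w + 1) ` PF \<subseteq> PF" by (auto intro: PF_add)
    ultimately show ?thesis using endo_inj_surj[of PF] by (simp add: bij_betw_def)
  qed
  have "(\<Sum>w\<in>PF. psi (w * v)) = (\<Sum>w\<in>PF. psi ((w + 1) * v))"
    using sum.reindex_bij_betw[OF bij, of "\<lambda>w. psi (w * v)"] by simp
  also have "\<dots> = (\<Sum>w\<in>PF. psi (w * v) * psi v)"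
    by (intro sum.cong refl) (simp add: distrib_right psi_add PF_mult assms)
  also have "\<dots> = (\<Sum>w\<in>PF. psi (w * v)) * psi v" by (simp add: sum_distrib_right)
  finally have SS: "(\<Sum>w\<in>PF. psi (w * v)) = (\<Sum>w\<in>PF. psi (w * v)) * psi v" .
  have "(\<Sum>w\<in>PF. psi (w * v)) * (1 - psi v) = (\<Sum>w\<in>PF. psi (w * v)) - (\<Sum>w\<in>PF. psi (w * v)) * psi v"
    by (simp add: right_diff_distrib)
  hence "(\<Sum>w\<in>PF. psi (w * v)) * (1 - psi v) = 0" using SS by simp
  moreover have "psi v \<noteq> 1" using psi_eq1 assms False by blast
  ultimately show ?thesis using False by simp
qed

end

context ffp
begin

lemma tr_add: "tr p m (x + y) = tr p m x + tr p m (y::'a)"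
  by (simp add: tr_def frob sum.distrib)

lemma tr_neg: "tr p m (- x) = - tr p m (x::'a)"
  by (simp add: tr_def frob_neg sum_negf)

lemma tr_diff: "tr p m (x - y) = tr p m x - tr p m (y::'a)"
  by (simp add: tr_def frob_diff sum_subtractf)

lemma tr_smul: "\<alpha> \<in> PF \<Longrightarrow> tr p m (\<alpha> * x) = \<alpha> * tr p m (x::'a)"
  by (simp add: tr_def power_mult_distrib PF_pow sum_distrib_left)

lemma tr_pow_p: "tr p m (x ^ p) = tr p m (x::'a) ^ p"
proof -
  have "tr p m x ^ p = tr p m x ^ (p^1)" by simp
  also have "\<dots> = (\<Sum>i<m. (x^(p^i))^(p^1))" unfolding tr_def by (rule frob_sum)
  also have "\<dots> = (\<Sum>i<m. (x^p)^(p^i))"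
    by (intro sum.cong refl) (simp add: power_mult[symmetric] mult.commute)
  finally show ?thesis by (simp add: tr_def)
qed

lemma tr_PF: "tr p m (x::'a) \<in> PF"
proof -
  let ?f = "\<lambda>i. x^(p^i)"
  have "tr p m x ^ p = tr p m x ^ (p^1)" by simp
  also have "\<dots> = (\<Sum>i<m. (x^(p^i))^(p^1))" unfolding tr_def by (rule frob_sum)
  also have "\<dots> = (\<Sum>i<m. ?f (Suc i))"
    by (intro sum.cong refl) (simp add: power_mult[symmetric] mult.commute)
  finally have e1: "tr p m x ^ p = (\<Sum>i<m. ?f (Suc i))" .
  have "(\<Sum>i<Suc m. ?f i) = ?f 0 + (\<Sum>i<m. ?f (Suc i))" by (rule sum.lessThan_Suc_shift)
  moreover have "(\<Sum>i<Suc m. ?f i) = (\<Sum>i<m. ?f i) + ?f m" by (rule sum.lessThan_Suc)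
  moreover have "?f m = ?f 0" using pow_card by simp
  ultimately have "(\<Sum>i<m. ?f (Suc i)) = (\<Sum>i<m. ?f i)" by (simp add: add.commute)
  thus ?thesis using e1 by (simp add: PF_def tr_def)
qed

lemma tr_frob: "tr p m ((x::'a) ^ (p^j)) = tr p m x"
proof (induction j)
  case (Suc j)
  have "x ^ (p ^ Suc j) = (x ^ (p^j)) ^ p" by (simp add: power_mult[symmetric] mult.commute)
  hence "tr p m (x ^ (p ^ Suc j)) = tr p m (x ^ (p^j)) ^ p" by (simp add: tr_pow_p)
  also have "\<dots> = tr p m (x ^ (p^j))" using tr_PF by (simp add: PF_def)
  finally show ?case using Suc by simp
qed simp

lemma tr_nonzero: "\<exists>z::'a. tr p m z \<noteq> 0"
proof (rule ccontr)
  assume "\<not> (\<exists>z::'a. tr p m z \<noteq> 0)"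
  hence all: "\<And>z::'a. tr p m z = 0" by blast
  define T :: "'a poly" where "T = (\<Sum>i<m. monom 1 (p^i))"
  have pT: "poly T z = tr p m z" for z by (simp add: T_def tr_def poly_sum poly_monom)
  have p1: "1 < p" using p_ge3 by simp
  have "coeff T (p^(m-1)) = (\<Sum>i<m. if i = m - 1 then 1 else 0)"
    unfolding T_def coeff_sum coeff_monom
    by (intro sum.cong refl) (use p1 in \<open>simp add: power_inject_exp\<close>)
  also have "\<dots> = 1" using m_pos by simp
  finally have "T \<noteq> 0" by auto
  have "degree T \<le> p^(m-1)" unfolding T_def
  proof (rule degree_sum_le)
    fix i assume "i \<in> {..<m}"
    hence "p^i \<le> p^(m-1)" using p1 by (intro power_increasing) auto
    thus "degree (monom (1::'a) (p^i)) \<le> p^(m-1)" using degree_monom_le[of "1::'a" "p^i"] by linarith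
  qed simp
  have "card {z. poly T z = 0} \<le> degree T" using card_poly_roots_bound[OF \<open>T \<noteq> 0\<close>] .
  also have "{z. poly T z = 0} = (UNIV :: 'a set)" using pT all by auto
  finally have "p^m \<le> p^(m-1)" using card_eq \<open>degree T \<le> _\<close> by simp
  moreover have "p^(m-1) < p^m" using p1 m_pos by (intro power_strict_increasing) auto
  ultimately show False by simp
qed

lemma tr_nondeg: assumes "\<And>z. tr p m (z * y) = 0" shows "(y::'a) = 0"
proof (rule ccontr)
  assume "y \<noteq> 0"
  obtain z0 :: 'a where "tr p m z0 \<noteq> 0" using tr_nonzero by blast
  moreover have "tr p m ((z0 / y) * y) = 0" by (rule assms)
  ultimately show False using \<open>y \<noteq> 0\<close> by simp
qed

lemma bij_endo: "finite A \<Longrightarrow> inj_on f A \<Longrightarrow> f ` A \<subseteq> A \<Longrightarrow> bij_betw f A A"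
  using endo_inj_surj by (simp add: bij_betw_def)

lemma additive_subgroup_card:
  assumes "(0::'a) \<in> H" "\<And>x y. x \<in> H \<Longrightarrow> y \<in> H \<Longrightarrow> x + y \<in> H" "\<And>x. x \<in> H \<Longrightarrow> - x \<in> H"
  shows "\<exists>d\<le>m. card H = p ^ d"
proof -
  define G where "G = \<lparr> carrier = (UNIV :: 'a set), monoid.mult = (+), one = (0 :: 'a) \<rparr>"
  interpret group G
  proof (rule groupI)
    fix x assume x: "x \<in> carrier G"
    show "\<exists>y\<in>carrier G. y \<otimes>\<^bsub>G\<^esub> x = \<one>\<^bsub>G\<^esub>"
      by (intro bexI[of _ "-x"]) (auto simp: G_def)
  qed (auto simp: G_def add_ac)
  have invG: "inv\<^bsub>G\<^esub> x = - x" for x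
    by (intro inv_equality) (auto simp: G_def)
  interpret subgroup H G
  proof
    show "H \<subseteq> carrier G" by (simp add: G_def)
    show "\<one>\<^bsub>G\<^esub> \<in> H" using assms(1) by (simp add: G_def)
    fix x y assume "x \<in> H" "y \<in> H"
    thus "x \<otimes>\<^bsub>G\<^esub> y \<in> H" using assms(2) by (simp add: G_def)
  next
    fix x assume "x \<in> H"
    thus "inv\<^bsub>G\<^esub> x \<in> H" using assms(3) invG by simp
  qed
  have "card (rcosets\<^bsub>G\<^esub> H) * card H = Coset.order G"
  proof (rule lagrange_finite)
    show "finite (carrier G)" by (simp add: G_def)
  qed (fact is_subgroup)
  hence "card H dvd p ^ m" using card_eq by (metis Coset.order_def G_def dvd_triv_right partial_object.select_convs(1))
  thus ?thesis using divides_primepow_nat[OF p_prime] by auto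
qed

end

locale qf = ffp p m ty for p m and ty :: "'a::{field,finite} itself" +
  fixes Q :: "'a \<Rightarrow> 'a" and B :: "'a \<Rightarrow> 'a \<Rightarrow> 'a"
  assumes Q_PF: "Q x \<in> PF"
    and Q_add: "Q (x + z) = Q x + Q z + B x z"
    and B_add1: "B (x + x') z = B x z + B x' z"
    and B_add2: "B x (z + z') = B x z + B x z'"
    and Q_smul: "\<alpha> \<in> PF \<Longrightarrow> Q (\<alpha> * x) = \<alpha>^2 * Q x"
    and B_smul1: "\<alpha> \<in> PF \<Longrightarrow> B (\<alpha> * x) z = \<alpha> * B x z"
    and B_smul2: "\<alpha> \<in> PF \<Longrightarrow> B x (\<alpha> * z) = \<alpha> * B x z"
begin

lemma B_PF: "B x z \<in> PF"
proof -
  have "B x z = Q (x + z) - Q x - Q z" using Q_add[of x z] by simp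
  thus ?thesis using Q_PF PF_diff by simp
qed

lemma B_zero1: "B 0 z = 0"
  using B_add1[of 0 0 z] by (metis add_cancel_right_right add_0)

lemma B_zero2: "B x 0 = 0"
  using B_add2[of x 0 0] by (metis add_cancel_right_right add_0)

lemma B_neg1: "B (- x) z = - B x z"
  using B_add1[of x "-x" z] B_zero1 by (simp add: eq_neg_iff_add_eq_0 add.commute)

lemma B_neg2: "B x (- z) = - B x z"
  using B_add2[of x z "-z"] B_zero2 by (simp add: eq_neg_iff_add_eq_0 add.commute)

lemma B_sym: "B x z = B z x"
  using Q_add[of x z] Q_add[of z x] by (simp add: add.commute)

lemma Q_neg: "Q (- x) = Q x"
  using Q_smul[of "-1" x] PF_neg[OF PF_1] by simp

definition Rad :: "'a set" where "Rad = {u. \<forall>z. B z u = 0}"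

lemma Q_Rad: assumes "u \<in> Rad" shows "Q u = 0"
proof -
  have "B u u = 0" using assms by (simp add: Rad_def)
  hence "Q (u + u) = 2 * Q u" using Q_add[of u u] by simp
  moreover have "Q (2 * u) = 4 * Q u" using Q_smul[of 2 u] PF_of_nat[of 2] by simp
  moreover have "u + u = 2 * u" by simp
  ultimately have "2 * (2 * Q u) = 2 * Q u" by simp
  hence "2 * Q u = Q u" by (simp only: mult_left_cancel[OF two_ne0])
  thus ?thesis by (metis mult_2 add_cancel_right_right)
qed

lemma Rad_card: "\<exists>d\<le>m. card Rad = p ^ d"
proof (rule additive_subgroup_card)
  show "0 \<in> Rad" using B_zero2 by (simp add: Rad_def)
  fix x y assume "x \<in> Rad" "y \<in> Rad" thus "x + y \<in> Rad" by (simp add: Rad_def B_add2)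
next
  fix x assume "x \<in> Rad"
  thus "- x \<in> Rad" using B_smul2[of "-1" _ x] PF_neg[OF PF_1] by (simp add: Rad_def)
qed

definition G :: "'a \<Rightarrow> complex" where "G w = (\<Sum>x\<in>UNIV. psi (w * Q x))"

lemma G0: "G 0 = of_nat (p ^ m)"
  using card_eq by (simp add: G_def)

lemma G_sum_PF: "(\<Sum>w\<in>PF. G w) = of_nat p * of_nat (card {x. Q x = 0})"
proof -
  have "(\<Sum>w\<in>PF. G w) = (\<Sum>x\<in>UNIV. \<Sum>w\<in>PF. psi (w * Q x))"
    unfolding G_def by (rule sum.swap)
  also have "\<dots> = (\<Sum>x\<in>UNIV. if Q x = 0 then of_nat p else 0)"
    by (intro sum.cong refl) (simp add: sum_psi Q_PF)
  also have "\<dots> = of_nat p * of_nat (card {x. Q x = 0})"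
    by (simp add: sum.If_cases Int_def)
  finally show ?thesis .
qed

lemma G_sq: assumes "\<alpha> \<in> PF" "\<alpha> \<noteq> 0" shows "G (\<alpha>^2 * w) = G w"
proof -
  have "G (\<alpha>^2 * w) = (\<Sum>x\<in>UNIV. psi (w * Q (\<alpha> * x)))"
    unfolding G_def by (intro sum.cong refl) (subst Q_smul[OF assms(1)], simp add: mult_ac)
  also have "\<dots> = (\<Sum>x\<in>UNIV. psi (w * Q x))"
    by (rule sum.reindex_bij_witness[of _ "\<lambda>x. x / \<alpha>" "\<lambda>x. \<alpha> * x"]) (use assms in auto)
  finally show ?thesis by (simp add: G_def)
qed

lemma G_sq_eq: "G w ^ 2 = (\<Sum>xz\<in>UNIV \<times> UNIV. psi (w * (Q (fst xz) + Q (snd xz))))" if "w \<in> PF"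
proof -
  have "G w ^ 2 = (\<Sum>x\<in>UNIV. \<Sum>z\<in>UNIV. psi (w * Q x) * psi (w * Q z))"
    by (simp add: G_def power2_eq_square sum_product)
  also have "\<dots> = (\<Sum>x\<in>UNIV. \<Sum>z\<in>UNIV. psi (w * (Q x + Q z)))"
    by (intro sum.cong refl) (simp add: distrib_left psi_add PF_mult Q_PF that)
  also have "\<dots> = (\<Sum>xz\<in>UNIV \<times> UNIV. psi (w * (Q (fst xz) + Q (snd xz))))"
    by (simp add: sum.cartesian_product split_def)
  finally show ?thesis .
qed

lemma G_rot: assumes s: "s \<in> PF" and nu: "s^2 + 1 \<noteq> 0" and w: "w \<in> PF"
  shows "G w ^ 2 = G ((s^2 + 1) * w) ^ 2"
proof -
  define \<nu> where "\<nu> = s^2 + 1"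
  have nuPF: "\<nu> \<in> PF" using s by (simp add: \<nu>_def PF_add PF_mult power2_eq_square)
  have nu0: "\<nu> \<noteq> 0" using nu by (simp add: \<nu>_def)
  have iden: "Q (s * x + z) + Q (s * z - x) = \<nu> * (Q x + Q z)" for x z
  proof -
    have 1: "Q (s * x + z) = s^2 * Q x + Q z + s * B x z"
      using Q_add[of "s*x" z] Q_smul[OF s, of x] B_smul1[OF s, of x z] by simp
    have "Q (s * z - x) = Q (s * z + (- x))" by simp
    also have "\<dots> = s^2 * Q z + Q x + s * B z (- x)"
      using Q_add[of "s*z" "-x"] Q_smul[OF s, of z] Q_neg[of x] B_smul1[OF s, of z "-x"] by simp
    also have "B z (- x) = - B x z" using B_neg2 B_sym by simp
    finally have 2: "Q (s * z - x) = s^2 * Q z + Q x - s * B x z" by simp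
    show ?thesis unfolding 1 2 \<nu>_def by (simp add: algebra_simps)
  qed
  have inv1: "s * ((s * x - z) / \<nu>) + (x + s * z) / \<nu> = x" for x z
  proof -
    have "s * ((s * x - z) / \<nu>) + (x + s * z) / \<nu> = (s * (s * x - z) + (x + s * z)) / \<nu>"
      by (simp add: add_divide_distrib)
    also have "s * (s * x - z) + (x + s * z) = \<nu> * x" by (simp add: \<nu>_def algebra_simps power2_eq_square)
    finally show ?thesis using nu0 by simp
  qed
  have inv2: "s * ((x + s * z) / \<nu>) - (s * x - z) / \<nu> = z" for x z
  proof -
    have "s * ((x + s * z) / \<nu>) - (s * x - z) / \<nu> = (s * (x + s * z) - (s * x - z)) / \<nu>"
      by (simp add: diff_divide_distrib)
    also have "s * (x + s * z) - (s * x - z) = \<nu> * z" by (simp add: \<nu>_def algebra_simps power2_eq_square)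
    finally show ?thesis using nu0 by simp
  qed
  have inv3: "(s * (s * x + z) - (s * z - x)) / \<nu> = x" for x z
  proof -
    have "s * (s * x + z) - (s * z - x) = \<nu> * x" by (simp add: \<nu>_def algebra_simps power2_eq_square)
    thus ?thesis using nu0 by simp
  qed
  have inv4: "(s * x + z + s * (s * z - x)) / \<nu> = z" for x z
  proof -
    have "s * x + z + s * (s * z - x) = \<nu> * z" by (simp add: \<nu>_def algebra_simps power2_eq_square)
    thus ?thesis using nu0 by simp
  qed
  have "G (\<nu> * w) ^ 2 = (\<Sum>xz\<in>UNIV \<times> UNIV. psi (\<nu> * w * (Q (fst xz) + Q (snd xz))))"
    using G_sq_eq[of "\<nu> * w"] PF_mult[OF nuPF w] by simp
  also have "\<dots> = (\<Sum>xz\<in>UNIV \<times> UNIV. psi (w * (Q (s * fst xz + snd xz) + Q (s * snd xz - fst xz))))"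
    by (intro sum.cong refl) (simp only: iden, simp add: mult_ac)
  also have "\<dots> = (\<Sum>xz\<in>UNIV \<times> UNIV. psi (w * (Q (fst xz) + Q (snd xz))))"
    by (rule sum.reindex_bij_witness[of _ "\<lambda>(x,z). ((s * x - z) / \<nu>, (x + s * z) / \<nu>)"
            "\<lambda>(x,z). (s * x + z, s * z - x)"])
       (use inv1 inv2 inv3 inv4 in auto)
  finally show ?thesis using G_sq_eq[OF w] by (simp add: \<nu>_def)
qed

end

lemma even_exp_sq:
  fixes t a :: int and q n :: nat
  assumes "prime q" "t^2 = a^2 * int q ^ n" "\<not> int q dvd a" "a \<noteq> 0"
  shows "even n"
proof -
  have pq: "prime (int q)" using assms(1) by simp
  hence pe: "prime_elem (int q)" by (rule prime_imp_prime_elem)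
  have "q > 0" using prime_gt_0_nat assms(1) by blast
  hence q0: "int q \<noteq> 0" by simp
  have r0: "a^2 * int q ^ n \<noteq> 0" using assms(4) q0 by simp
  have t0: "t \<noteq> 0"
  proof
    assume "t = 0"
    hence "a^2 * int q ^ n = 0" using assms(2) by simp
    thus False using r0 by blast
  qed
  have a2: "a^2 \<noteq> 0" using assms(4) by simp
  have qn: "int q ^ n \<noteq> 0" using q0 by simp
  have m1: "multiplicity (int q) (t^2) = 2 * multiplicity (int q) t"
    by (rule prime_elem_multiplicity_power_distrib[OF pe t0])
  have m2: "multiplicity (int q) (a^2 * int q ^ n) = multiplicity (int q) (a^2) + multiplicity (int q) (int q ^ n)"
    by (rule prime_elem_multiplicity_mult_distrib[OF pe a2 qn])
  have nd: "\<not> int q dvd a^2"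
    using assms(3) prime_dvd_mult_iff[OF pq, of a a] by (simp add: power2_eq_square)
  have m3: "multiplicity (int q) (a^2) = 0"
    by (rule not_dvd_imp_multiplicity_0[OF nd])
  have m4: "multiplicity (int q) (int q ^ n) = n" by (rule multiplicity_prime_power[OF pe])
  have "2 * multiplicity (int q) t = multiplicity (int q) (a^2 * int q ^ n)"
    using m1 assms(2) by simp
  also have "\<dots> = n" using m2 m3 m4 by simp
  finally have "n = 2 * multiplicity (int q) t" by simp
  thus ?thesis by simp
qed

context qf
begin

lemma shift_sum: "(\<Sum>x\<in>UNIV. f x) = (\<Sum>u\<in>UNIV. f (z + u))" for z :: 'a and f :: "'a \<Rightarrow> complex"
  by (rule sum.reindex_bij_witness[of _ "\<lambda>u. z + u" "\<lambda>x. x - z"]) auto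

lemma inner_sum: assumes w: "w \<in> PF" "w \<noteq> 0"
  shows "(\<Sum>z\<in>UNIV. psi (w * B z u)) = (if u \<in> Rad then of_nat (p^m) else 0)"
proof (cases "u \<in> Rad")
  case True
  hence "\<And>z. B z u = 0" by (simp add: Rad_def)
  thus ?thesis using True card_eq by simp
next
  case False
  then obtain z0 where z0: "B z0 u \<noteq> 0" by (auto simp: Rad_def)
  let ?S = "(\<Sum>z\<in>UNIV. psi (w * B z u))"
  have "?S = (\<Sum>z\<in>UNIV. psi (w * B (z0 + z) u))" by (rule shift_sum)
  also have "\<dots> = (\<Sum>z\<in>UNIV. psi (w * B z0 u) * psi (w * B z u))"
    by (intro sum.cong refl) (simp add: B_add1 distrib_left psi_add PF_mult B_PF w)
  also have "\<dots> = psi (w * B z0 u) * ?S" by (simp add: sum_distrib_left)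
  finally have SS: "?S = psi (w * B z0 u) * ?S" .
  have "psi (w * B z0 u) \<noteq> 1"
  proof
    assume "psi (w * B z0 u) = 1"
    hence "w * B z0 u = 0" using psi_eq1 PF_mult[OF w(1) B_PF] by blast
    thus False using w z0 by simp
  qed
  hence ne: "1 - psi (w * B z0 u) \<noteq> 0" by simp
  have "(1 - psi (w * B z0 u)) * ?S = ?S - psi (w * B z0 u) * ?S" by (simp add: left_diff_distrib)
  also have "\<dots> = 0" using SS by simp
  finally have "?S = 0" using ne by simp
  thus ?thesis using False by simp
qed

lemma G_pair: assumes w: "w \<in> PF" "w \<noteq> 0"
  shows "G w * G (- w) = of_nat (p^m) * of_nat (card Rad)"
proof -
  have pt: "psi (w * Q (z + u)) * psi (- w * Q z) = psi (w * Q u) * psi (w * B z u)" for z u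
  proof -
    have "psi (w * Q (z + u)) * psi (- w * Q z) = psi (w * Q (z + u) + - w * Q z)"
      using psi_add[OF PF_mult[OF w(1) Q_PF] PF_mult[OF PF_neg[OF w(1)] Q_PF]] by simp
    also have "w * Q (z + u) + - w * Q z = w * Q u + w * B z u"
      using Q_add[of z u] by (simp add: algebra_simps)
    also have "psi (w * Q u + w * B z u) = psi (w * Q u) * psi (w * B z u)"
      using psi_add[OF PF_mult[OF w(1) Q_PF] PF_mult[OF w(1) B_PF]] .
    finally show ?thesis .
  qed
  have "G w * G (- w) = (\<Sum>z\<in>UNIV. \<Sum>x\<in>UNIV. psi (w * Q x) * psi (- w * Q z))"
    unfolding G_def sum_product by (rule sum.swap)
  also have "\<dots> = (\<Sum>z\<in>UNIV. \<Sum>u\<in>UNIV. psi (w * Q (z + u)) * psi (- w * Q z))"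
    by (rule sum.cong[OF refl], rule shift_sum)
  also have "\<dots> = (\<Sum>z\<in>UNIV. \<Sum>u\<in>UNIV. psi (w * Q u) * psi (w * B z u))"
    by (simp only: pt)
  also have "\<dots> = (\<Sum>u\<in>UNIV. psi (w * Q u) * (\<Sum>z\<in>UNIV. psi (w * B z u)))"
    by (subst sum.swap) (simp add: sum_distrib_left)
  also have "\<dots> = (\<Sum>u\<in>UNIV. if u \<in> Rad then of_nat (p^m) else 0)"
    by (intro sum.cong refl) (simp add: inner_sum w Q_Rad)
  also have "\<dots> = of_nat (p^m) * of_nat (card Rad)"
    by (simp add: sum.If_cases Int_def)
  finally show ?thesis .
qed

lemma T_cases:
  assumes s: "s \<in> PF" and nu0: "s^2 + 1 \<noteq> 0"
    and dich: "\<And>w. w \<in> PF \<Longrightarrow> w \<noteq> 0 \<Longrightarrow> (\<exists>\<alpha>\<in>PF. \<alpha> \<noteq> 0 \<and> w = \<alpha>^2) \<or> (\<exists>\<alpha>\<in>PF. \<alpha> \<noteq> 0 \<and> w = (s^2+1) * \<alpha>^2)"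
  shows "(\<Sum>w\<in>PF-{0}. G w) = 0 \<or>
     ((\<Sum>w\<in>PF-{0}. G w) = of_nat (p - 1) * G 1 \<and> G 1 ^ 2 = of_nat (p^m) * of_nat (card Rad))"
proof -
  define \<nu> where "\<nu> = s^2 + 1"
  have nuPF: "\<nu> \<in> PF" using s by (simp add: \<nu>_def PF_add PF_mult power2_eq_square)
  have nz: "\<nu> \<noteq> 0" using nu0 by (simp add: \<nu>_def)
  have "G 1 ^ 2 = G \<nu> ^ 2" using G_rot[OF s nu0 PF_1] by (simp add: \<nu>_def)
  hence alt: "G \<nu> = G 1 \<or> G \<nu> = - G 1" by (metis power2_eq_iff)
  have cls: "(G w = G 1 \<and> G (\<nu> * w) = G \<nu>) \<or> (G w = G \<nu> \<and> G (\<nu> * w) = G 1)"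
    if w: "w \<in> PF" "w \<noteq> 0" for w
  proof -
    from dich[OF w] show ?thesis
    proof
      assume "\<exists>\<alpha>\<in>PF. \<alpha> \<noteq> 0 \<and> w = \<alpha>^2"
      then obtain \<alpha> where a: "\<alpha> \<in> PF" "\<alpha> \<noteq> 0" "w = \<alpha>^2" by blast
      have "G w = G 1" using G_sq[OF a(1,2), of 1] a(3) by simp
      moreover have "G (\<nu> * w) = G \<nu>" using G_sq[OF a(1,2), of \<nu>] a(3) by (simp add: mult.commute)
      ultimately show ?thesis by simp
    next
      assume "\<exists>\<alpha>\<in>PF. \<alpha> \<noteq> 0 \<and> w = (s^2+1) * \<alpha>^2"
      then obtain \<alpha> where a: "\<alpha> \<in> PF" "\<alpha> \<noteq> 0" "w = \<nu> * \<alpha>^2" unfolding \<nu>_def by blast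
      have "G w = G \<nu>" using G_sq[OF a(1,2), of \<nu>] a(3) by (simp add: mult.commute)
      moreover have "G (\<nu> * w) = G 1"
        using G_sq[OF PF_mult[OF nuPF a(1)], of 1] a(2,3) nz by (simp add: power_mult_distrib power2_eq_square mult_ac)
      ultimately show ?thesis by simp
    qed
  qed
  have fin: "finite (PF - {0})" by simp
  from alt show ?thesis
  proof
    assume eq: "G \<nu> = G 1"
    have all: "G w = G 1" if "w \<in> PF - {0}" for w using cls[of w] that eq by auto
    have "(\<Sum>w\<in>PF-{0}. G w) = (\<Sum>w\<in>PF-{0}. G 1)" by (intro sum.cong refl all)
    also have "\<dots> = of_nat (p - 1) * G 1" using card_PF by (simp add: card_Diff_singleton)
    finally have s1: "(\<Sum>w\<in>PF-{0}. G w) = of_nat (p - 1) * G 1" .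
    have "G (- 1) = G 1" using all[of "-1"] PF_neg[OF PF_1] by simp
    hence "G 1 ^ 2 = of_nat (p^m) * of_nat (card Rad)"
      using G_pair[OF PF_1] by (simp add: power2_eq_square)
    thus ?thesis using s1 by simp
  next
    assume eq: "G \<nu> = - G 1"
    have neg: "G (\<nu> * w) = - G w" if "w \<in> PF - {0}" for w using cls[of w] that eq by auto
    have bij: "bij_betw (\<lambda>w. \<nu> * w) (PF - {0}) (PF - {0})"
      by (rule bij_endo) (use nz nuPF in \<open>auto simp: inj_on_def PF_mult\<close>)
    have "(\<Sum>w\<in>PF-{0}. G w) = (\<Sum>w\<in>PF-{0}. G (\<nu> * w))"
      using sum.reindex_bij_betw[OF bij, of G] by simp
    also have "\<dots> = (\<Sum>w\<in>PF-{0}. - G w)" by (intro sum.cong refl neg)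
    finally have "(\<Sum>w\<in>PF-{0}. G w) = - (\<Sum>w\<in>PF-{0}. G w)" by (simp add: sum_negf)
    thus ?thesis by simp
  qed
qed

lemma T_int: "(\<Sum>w\<in>PF-{0}. G w) = of_int (int p * int (card {x. Q x = 0}) - int (p^m))"
proof -
  have "(\<Sum>w\<in>PF. G w) = G 0 + (\<Sum>w\<in>PF-{0}. G w)" by (simp add: sum.remove)
  thus ?thesis using G_sum_PF G0 by (simp add: algebra_simps)
qed

lemma T_zero_form: assumes "Rad = UNIV" shows "(\<Sum>w\<in>PF-{0}. G w) = of_nat ((p - 1) * p^m)"
proof -
  have "G w = of_nat (p^m)" for w using Q_Rad assms card_eq by (simp add: G_def)
  thus ?thesis using card_PF by (simp add: card_Diff_singleton)
qed

lemma T_values: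
  assumes s: "s \<in> PF" and nu0: "s^2 + 1 \<noteq> 0"
    and dich: "\<And>w. w \<in> PF \<Longrightarrow> w \<noteq> 0 \<Longrightarrow> (\<exists>\<alpha>\<in>PF. \<alpha> \<noteq> 0 \<and> w = \<alpha>^2) \<or> (\<exists>\<alpha>\<in>PF. \<alpha> \<noteq> 0 \<and> w = (s^2+1) * \<alpha>^2)"
    and small: "card Rad \<le> p^2" and modd: "odd m"
  shows "(\<Sum>w\<in>PF-{0}. G w) \<in> {0, of_nat ((p - 1) * p ^ ((m + 1) div 2)), - of_nat ((p - 1) * p ^ ((m + 1) div 2))}"
    and "card Rad = 1 \<Longrightarrow> (\<Sum>w\<in>PF-{0}. G w) = 0"
proof -
  obtain d where d: "d \<le> m" "card Rad = p ^ d" using Rad_card by blast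
  have p1: "1 < p" using p_ge3 by simp
  have d2: "d \<le> 2" using small d(2) p1 by (metis power_le_imp_le_exp)
  define t where "t = int p * int (card {x. Q x = 0}) - int (p^m)"
  have Tt: "(\<Sum>w\<in>PF-{0}. G w) = of_int t" using T_int by (simp add: t_def)
  have main: "t = 0 \<or> (d = 1 \<and> (t = int ((p - 1) * p ^ ((m + 1) div 2)) \<or> t = - int ((p - 1) * p ^ ((m + 1) div 2))))"
  proof -
    from T_cases[OF s nu0 dich] consider "(\<Sum>w\<in>PF-{0}. G w) = 0"
      | "(\<Sum>w\<in>PF-{0}. G w) = of_nat (p - 1) * G 1" "G 1 ^ 2 = of_nat (p^m) * of_nat (card Rad)"
      by blast
    thus ?thesis
    proof cases
      case 1 thus ?thesis using Tt by simp
    next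
      case 2
      have "(of_int t :: complex)^2 = (of_nat (p - 1))^2 * (G 1 ^ 2)" using 2(1) Tt by (simp add: power_mult_distrib)
      also have "\<dots> = of_int ((int (p - 1))^2 * int p ^ (m + d))" using 2(2) d(2) by (simp add: power_add)
      finally have "(of_int (t^2)::complex) = of_int ((int (p - 1))^2 * int p ^ (m + d))" by (simp only: of_int_power)
      hence tt: "t^2 = (int (p - 1))^2 * int p ^ (m + d)" by (simp only: of_int_eq_iff)
      have ndvd: "\<not> int p dvd int (p - 1)"
      proof
        assume "int p dvd int (p - 1)"
        hence "p dvd p - 1" by simp
        hence "p \<le> p - 1" using p1 by (intro dvd_imp_le) auto
        thus False using p1 by simp
      qed
      have "even (m + d)" using even_exp_sq[OF p_prime tt ndvd] p1 by simp
      hence d1: "d = 1" using modd d2 by (cases d; cases "d - 1"; simp)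
      hence "(m + d) = 2 * ((m + 1) div 2)" using modd by simp
      hence "t^2 = (int ((p - 1) * p ^ ((m + 1) div 2)))^2" using tt d1 p1
        by (simp add: power_mult_distrib power_mult[symmetric] mult.commute)
      hence "t = int ((p - 1) * p ^ ((m + 1) div 2)) \<or> t = - int ((p - 1) * p ^ ((m + 1) div 2))"
        by (simp only: power2_eq_iff)
      thus ?thesis using d1 by blast
    qed
  qed
  show "(\<Sum>w\<in>PF-{0}. G w) \<in> {0, of_nat ((p - 1) * p ^ ((m + 1) div 2)), - of_nat ((p - 1) * p ^ ((m + 1) div 2))}"
    using main Tt by auto
  assume "card Rad = 1"
  hence "d = 0" using d(2) p1 by (metis power_0 power_inject_exp)
  thus "(\<Sum>w\<in>PF-{0}. G w) = 0" using main Tt by simp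
qed

end

context ffp
begin

definition sig :: "nat \<Rightarrow> 'a \<Rightarrow> 'a" where "sig k u = u ^ (p^k)"

lemma sig_mult: "sig k (a * b) = sig k a * sig k b" by (simp add: sig_def power_mult_distrib)
lemma sig_add: "sig k (a + b) = sig k a + sig k b" by (simp add: sig_def frob)
lemma sig_diff: "sig k (a - b) = sig k a - sig k b" by (simp add: sig_def frob_diff)
lemma sig_div: "sig k (a / b) = sig k a / sig k b" by (simp add: sig_def power_divide)
lemma sig_eq0: "sig k a = 0 \<longleftrightarrow> a = 0" using p_ge3 by (simp add: sig_def)
lemma sig_PF: "a \<in> PF \<Longrightarrow> sig k a = a" by (simp add: sig_def PF_pow)

lemma K_bound:
  assumes cop: "coprime k m" and m2: "m \<ge> 2" and C0: "C \<noteq> 0"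
    and K: "\<And>u. u \<in> K \<Longrightarrow> sig k C * sig k (sig k u) + D * sig k u + C * u = 0"
  shows "card K \<le> p^2"
proof -
  let ?s = "sig k"
  define c1 where "c1 = ?s C"
  have c10: "c1 \<noteq> 0" using C0 sig_eq0 by (simp add: c1_def)
  define W where "W x y = x * ?s y - y * ?s x" for x y
  have fixPF: "z \<in> PF" if "?s z = z" for z using PF_sigma[OF cop _ m2] that by (simp add: sig_def)
  have Wsig: "?s (W x y) = (C / c1) * W x y" if "x \<in> K" "y \<in> K" for x y
  proof -
    have ex: "c1 * ?s (?s x) = - (D * ?s x + C * x)" using K[OF that(1)] by (simp add: c1_def algebra_simps eq_neg_iff_add_eq_0)
    have ey: "c1 * ?s (?s y) = - (D * ?s y + C * y)" using K[OF that(2)] by (simp add: c1_def algebra_simps eq_neg_iff_add_eq_0)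
    have "c1 * ?s (W x y) = ?s x * (c1 * ?s (?s y)) - ?s y * (c1 * ?s (?s x))"
      by (simp add: W_def sig_diff sig_mult algebra_simps)
    also have "\<dots> = C * W x y" unfolding ex ey W_def by (simp add: algebra_simps)
    finally show ?thesis using c10 by (simp add: field_simps)
  qed
  have ratio: "y / x \<in> PF \<and> y = (y / x) * x" if "x \<noteq> 0" "W x y = 0" for x y
  proof -
    have sx: "?s x \<noteq> 0" using that(1) sig_eq0 by simp
    have "x * ?s y = y * ?s x" using that(2) by (simp add: W_def)
    hence "?s (y / x) = y / x" using sx that(1) by (simp add: sig_div field_simps)
    thus ?thesis using fixPF that(1) by simp
  qed
  show ?thesis
  proof (cases "K \<subseteq> {0}")
    case True
    hence "card K \<le> 1" using card_mono[of "{0}" K] by simp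
    also have "1 \<le> p^2" using p_ge3 by simp
    finally show ?thesis .
  next
    case False
    then obtain x1 where x1: "x1 \<in> K" "x1 \<noteq> 0" by blast
    show ?thesis
    proof (cases "\<forall>y\<in>K. W x1 y = 0")
      case True
      have "K \<subseteq> (\<lambda>\<alpha>. \<alpha> * x1) ` PF"
      proof
        fix y assume "y \<in> K"
        hence "y / x1 \<in> PF \<and> y = (y / x1) * x1" using ratio[OF x1(2)] True by blast
        thus "y \<in> (\<lambda>\<alpha>. \<alpha> * x1) ` PF" by blast
      qed
      hence "card K \<le> card ((\<lambda>\<alpha>. \<alpha> * x1) ` PF)" by (intro card_mono) auto
      also have "\<dots> \<le> card PF" by (rule card_image_le) simp
      also have "\<dots> \<le> p^2" using card_PF p_ge3 by (simp add: power2_eq_square)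
      finally show ?thesis .
    next
      case False
      then obtain x3 where x3: "x3 \<in> K" "W x1 x3 \<noteq> 0" by blast
      have "K \<subseteq> (\<lambda>(\<alpha>, \<beta>). \<alpha> * x1 + \<beta> * x3) ` (PF \<times> PF)"
      proof
        fix y assume y: "y \<in> K"
        define \<beta> where "\<beta> = W x1 y / W x1 x3"
        have CC: "C / c1 \<noteq> 0" using C0 c10 by simp
        have "?s \<beta> = \<beta>" unfolding \<beta>_def sig_div Wsig[OF x1(1) y] Wsig[OF x1(1) x3(1)]
          using CC by simp
        hence bPF: "\<beta> \<in> PF" using fixPF by simp
        have "W x1 (y - \<beta> * x3) = W x1 y - \<beta> * W x1 x3"
          using sig_PF[OF bPF] by (simp add: W_def sig_diff sig_mult algebra_simps)
        also have "\<dots> = 0" using x3(2) by (simp add: \<beta>_def)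
        finally have "(y - \<beta> * x3) / x1 \<in> PF \<and> y - \<beta> * x3 = ((y - \<beta> * x3) / x1) * x1"
          using ratio[OF x1(2)] by blast
        hence "y = ((y - \<beta> * x3) / x1) * x1 + \<beta> * x3 \<and> (y - \<beta> * x3) / x1 \<in> PF" by (simp add: algebra_simps)
        thus "y \<in> (\<lambda>(\<alpha>, \<beta>). \<alpha> * x1 + \<beta> * x3) ` (PF \<times> PF)" using bPF
          by (intro image_eqI[of _ _ "((y - \<beta> * x3) / x1, \<beta>)"]) auto
      qed
      hence "card K \<le> card ((\<lambda>(\<alpha>, \<beta>). \<alpha> * x1 + \<beta> * x3) ` (PF \<times> PF))" by (intro card_mono) auto
      also have "\<dots> \<le> card (PF \<times> PF)" by (rule card_image_le) simp
      also have "\<dots> = p^2" using card_PF by (simp add: card_cartesian_product power2_eq_square)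
      finally show ?thesis .
    qed
  qed
qed

end

context ffp
begin

definition Qc :: "nat \<Rightarrow> 'a \<Rightarrow> 'a \<Rightarrow> 'a \<Rightarrow> 'a" where
  "Qc k A C x = tr p m (A * x^2 + C * x^(p^k+1))"
definition Bc :: "nat \<Rightarrow> 'a \<Rightarrow> 'a \<Rightarrow> 'a \<Rightarrow> 'a \<Rightarrow> 'a" where
  "Bc k A C x z = tr p m (2*A*x*z + C*(x^(p^k)*z + x*z^(p^k)))"

lemma pow_pk1: "(x::'a)^(p^k+1) = x^(p^k) * x"
  by (simp add: power_add)

lemma Qc_add: "Qc k A C (x + z) = Qc k A C x + Qc k A C z + Bc k A C x z"
proof -
  have e: "(x+z)^(p^k+1) = x^(p^k+1) + z^(p^k+1) + (x^(p^k)*z + x*z^(p^k))"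
    unfolding pow_pk1 frob by (simp add: algebra_simps)
  have "A*(x+z)^2 + C*(x+z)^(p^k+1) = (A*x^2 + C*x^(p^k+1)) + (A*z^2 + C*z^(p^k+1)) + (2*A*x*z + C*(x^(p^k)*z + x*z^(p^k)))"
    unfolding e by (simp add: power2_eq_square algebra_simps)
  thus ?thesis by (simp only: Qc_def Bc_def tr_add)
qed

lemma Bc_add1: "Bc k A C (x + x') z = Bc k A C x z + Bc k A C x' z"
proof -
  have "2*A*(x+x')*z + C*((x+x')^(p^k)*z + (x+x')*z^(p^k)) = (2*A*x*z + C*(x^(p^k)*z + x*z^(p^k))) + (2*A*x'*z + C*(x'^(p^k)*z + x'*z^(p^k)))"
    unfolding frob by (simp add: algebra_simps)
  thus ?thesis by (simp only: Bc_def tr_add)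
qed

lemma Bc_add2: "Bc k A C x (z + z') = Bc k A C x z + Bc k A C x z'"
proof -
  have "2*A*x*(z+z') + C*(x^(p^k)*(z+z') + x*(z+z')^(p^k)) = (2*A*x*z + C*(x^(p^k)*z + x*z^(p^k))) + (2*A*x*z' + C*(x^(p^k)*z' + x*z'^(p^k)))"
    unfolding frob by (simp add: algebra_simps)
  thus ?thesis by (simp only: Bc_def tr_add)
qed

lemma Qc_smul: assumes "\<alpha> \<in> PF" shows "Qc k A C (\<alpha> * x) = \<alpha>^2 * Qc k A C x"
proof -
  have "A*(\<alpha>*x)^2 + C*(\<alpha>*x)^(p^k+1) = \<alpha>^2 * (A*x^2 + C*x^(p^k+1))"
    unfolding pow_pk1 power_mult_distrib PF_pow[OF assms] by (simp add: power2_eq_square algebra_simps)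
  moreover have "\<alpha>^2 \<in> PF" using assms by (simp add: power2_eq_square PF_mult)
  ultimately show ?thesis by (simp add: Qc_def tr_smul)
qed

lemma Bc_smul1: assumes "\<alpha> \<in> PF" shows "Bc k A C (\<alpha> * x) z = \<alpha> * Bc k A C x z"
proof -
  have "2*A*(\<alpha>*x)*z + C*((\<alpha>*x)^(p^k)*z + (\<alpha>*x)*z^(p^k)) = \<alpha> * (2*A*x*z + C*(x^(p^k)*z + x*z^(p^k)))"
    unfolding power_mult_distrib PF_pow[OF assms] by (simp add: algebra_simps)
  thus ?thesis using assms by (simp add: Bc_def tr_smul)
qed

lemma Bc_smul2: assumes "\<alpha> \<in> PF" shows "Bc k A C x (\<alpha> * z) = \<alpha> * Bc k A C x z"
proof -
  have "2*A*x*(\<alpha>*z) + C*(x^(p^k)*(\<alpha>*z) + x*(\<alpha>*z)^(p^k)) = \<alpha> * (2*A*x*z + C*(x^(p^k)*z + x*z^(p^k)))"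
    unfolding power_mult_distrib PF_pow[OF assms] by (simp add: algebra_simps)
  thus ?thesis using assms by (simp add: Bc_def tr_smul)
qed

lemma QcPF: "Qc k A C x \<in> PF" by (simp add: Qc_def tr_PF)

lemma qf_conc: "qf p m (Qc k A C) (Bc k A C)"
  by unfold_locales
     (auto simp: QcPF Qc_add Bc_add1 Bc_add2 Qc_smul Bc_smul1 Bc_smul2
           intro: p_prime p_odd card_eq m_pos)

lemma Bc_alt: "Bc k A C z u = tr p m (z * (2*A*u + C*u^(p^k) + (C*u)^(p^(k*(m-1)))))"
proof -
  have e: "k + k*(m-1) = m*k" using m_pos by (cases m) (simp_all add: algebra_simps)
  have kk: "p^k * p^(k*(m-1)) = p^(m*k)" unfolding power_add[symmetric] e ..
  have "tr p m (C*u*z^(p^k)) = tr p m ((C*u*z^(p^k))^(p^(k*(m-1))))" by (simp only: tr_frob)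
  also have "(C*u*z^(p^k))^(p^(k*(m-1))) = (C*u)^(p^(k*(m-1))) * z"
    unfolding power_mult_distrib power_mult[symmetric] kk pow_card_mult ..
  finally have t: "tr p m (C*u*z^(p^k)) = tr p m ((C*u)^(p^(k*(m-1))) * z)" .
  have "2*A*z*u + C*(z^(p^k)*u + z*u^(p^k)) = z * (2*A*u + C*u^(p^k)) + C*u*z^(p^k)"
    by (simp add: algebra_simps)
  hence "Bc k A C z u = tr p m (z * (2*A*u + C*u^(p^k))) + tr p m ((C*u)^(p^(k*(m-1))) * z)"
    by (simp only: Bc_def tr_add t)
  also have "\<dots> = tr p m (z * (2*A*u + C*u^(p^k)) + (C*u)^(p^(k*(m-1))) * z)"
    by (simp only: tr_add)
  also have "z * (2*A*u + C*u^(p^k)) + (C*u)^(p^(k*(m-1))) * z = z * (2*A*u + C*u^(p^k) + (C*u)^(p^(k*(m-1))))"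
    by (simp add: algebra_simps)
  finally show ?thesis .
qed

lemma Rad_eq: assumes "\<forall>z. Bc k A C z u = 0"
  shows "2*A*u + C*u^(p^k) + (C*u)^(p^(k*(m-1))) = 0"
proof (rule tr_nondeg)
  fix z show "tr p m (z * (2*A*u + C*u^(p^k) + (C*u)^(p^(k*(m-1))))) = 0"
    using assms[rule_format, of z] Bc_alt[of k A C z u] by simp
qed

lemma Rad_sub: assumes "\<forall>z. Bc k A C z u = 0"
  shows "sig k C * sig k (sig k u) + 2 * sig k A * sig k u + C * u = 0"
proof -
  have e: "k*(m-1) + k = m*k" using m_pos by (cases m) (simp_all add: algebra_simps)
  have kk: "p^(k*(m-1)) * p^k = p^(m*k)" unfolding power_add[symmetric] e ..
  have s2: "sig k (2::'a) = 2" using sig_PF[of 2 k] PF_of_nat[of 2] by simp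
  have "sig k (2*A*u + C*u^(p^k) + (C*u)^(p^(k*(m-1)))) = 0" using Rad_eq[OF assms] sig_eq0 by simp
  moreover have "sig k ((C*u)^(p^(k*(m-1)))) = C * u"
    unfolding sig_def power_mult[symmetric] kk pow_card_mult ..
  moreover have "sig k (u^(p^k)) = sig k (sig k u)" by (simp add: sig_def)
  ultimately show ?thesis by (simp add: sig_add sig_mult s2 mult_ac add_ac)
qed

end

context ffp
begin

lemma sum_of_nat_PF: "(\<Sum>y\<in>{1..<p}. g (of_nat y :: 'a)) = (\<Sum>w\<in>PF-{0}. g w)"
proof -
  have inj: "inj_on (of_nat :: nat \<Rightarrow> 'a) {1..<p}"
    by (rule inj_on_subset[OF of_nat_inj]) auto
  have e: "{1..<p} = {..<p} - {0}" by auto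
  have "(of_nat :: nat \<Rightarrow> 'a) ` {1..<p} = of_nat ` {..<p} - of_nat ` {0}"
    unfolding e by (rule inj_on_image_set_diff[OF of_nat_inj]) (use p_ge3 in auto)
  hence img: "(of_nat :: nat \<Rightarrow> 'a) ` {1..<p} = PF - {0}" using PF_eq by simp
  show ?thesis using sum.reindex[OF inj, of g] img by simp
qed

lemma cong_eq: "[a = b] (mod int p) \<Longrightarrow> (of_int a :: 'a) = of_int b"
proof -
  assume "[a = b] (mod int p)"
  hence "[a = b] (mod int CHAR('a))" by (simp only: char_eq)
  thus ?thesis by (simp only: of_int_eq_iff_cong_CHAR)
qed

lemma QR0: "QuadRes (int p) 0" unfolding QuadRes_def by (intro exI[of _ 0]) simp
lemma QR1: "QuadRes (int p) 1" unfolding QuadRes_def by (intro exI[of _ 1]) simp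

lemma not_dvd_small: assumes "0 < y" "y < p" shows "\<not> int p dvd int y"
proof
  assume "int p dvd int y"
  hence "p dvd y" by simp
  hence "p \<le> y" using assms(1) by (rule dvd_imp_le)
  thus False using assms(2) by simp
qed

lemma nonres_setup:
  assumes lam: "\<not> QuadRes (int p) lam"
  shows "\<exists>s\<in>PF. s^2 + 1 \<noteq> 0 \<and> (\<forall>w\<in>PF. w \<noteq> 0 \<longrightarrow>
           (\<exists>\<alpha>\<in>PF. \<alpha> \<noteq> 0 \<and> w = \<alpha>^2) \<or> (\<exists>\<alpha>\<in>PF. \<alpha> \<noteq> 0 \<and> w = (s^2+1) * \<alpha>^2))"
proof -
  have pp: "prime (int p)" using p_prime by simp
  have p2: "2 < p" using p_ge3 by simp
  define n0 where "n0 = nat (lam mod int p)"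
  have n0: "int n0 = lam mod int p" using p_ge3 by (simp add: n0_def)
  have "lam mod int p < int p" using p_ge3 by simp
  hence "int n0 < int p" using n0 by simp
  hence n0p: "n0 < p" by simp
  have cn: "[int n0 = lam] (mod int p)" using n0 by (simp add: Cong.cong_def)
  have nr0: "\<not> QuadRes (int p) (int n0)"
  proof
    assume "QuadRes (int p) (int n0)"
    then obtain y where "[y^2 = int n0] (mod int p)" by (auto simp: QuadRes_def)
    hence "[y^2 = lam] (mod int p)" using cn by (rule cong_trans)
    thus False using lam by (auto simp: QuadRes_def)
  qed
  define \<nu>0 where "\<nu>0 = (LEAST n. \<not> QuadRes (int p) (int n))"
  have nr: "\<not> QuadRes (int p) (int \<nu>0)" unfolding \<nu>0_def by (rule LeastI[of _ n0]) (rule nr0)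
  have le: "\<nu>0 \<le> n0" unfolding \<nu>0_def by (rule Least_le) (rule nr0)
  have nu0: "\<nu>0 \<noteq> 0"
  proof
    assume "\<nu>0 = 0" thus False using nr QR0 by simp
  qed
  have nu1: "\<nu>0 \<noteq> 1" using nr QR1 by auto
  have "\<nu>0 - 1 < \<nu>0" using nu0 by simp
  hence "\<not> \<not> QuadRes (int p) (int (\<nu>0 - 1))" unfolding \<nu>0_def by (rule not_less_Least)
  then obtain s0 where s0: "[s0^2 = int (\<nu>0 - 1)] (mod int p)" by (auto simp: QuadRes_def)
  define s where "s = (of_int s0 :: 'a)"
  have sPF: "s \<in> PF" by (simp add: s_def)
  have "s^2 = of_int (int (\<nu>0 - 1))" using cong_eq[OF s0] by (simp add: s_def)
  also have "\<dots> = of_nat \<nu>0 - 1" using nu0 by (simp add: of_nat_diff)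
  finally have snu: "s^2 + 1 = of_nat \<nu>0" by simp
  have nup: "\<nu>0 < p" using le n0p by simp
  have nunz: "(of_nat \<nu>0 :: 'a) \<noteq> 0"
  proof
    assume "(of_nat \<nu>0 :: 'a) = 0"
    hence "p dvd \<nu>0" using of_nat_eq0 by simp
    hence "p \<le> \<nu>0" using nu0 by (intro dvd_imp_le) auto
    thus False using nup by simp
  qed
  have nundvd: "\<not> int p dvd int \<nu>0" using not_dvd_small[of \<nu>0] nu0 nup by simp
  define h where "h = (p - 1) div 2"
  have Lnu: "[-1 = int \<nu>0 ^ h] (mod int p)"
  proof -
    have "Legendre (int \<nu>0) (int p) = -1"
      using nr nundvd by (simp add: Legendre_def Cong.cong_def mod_eq_0_iff_dvd)
    thus ?thesis using euler_criterion[OF p_prime p2, of "int \<nu>0"] by (simp add: h_def)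
  qed
  show ?thesis
  proof (intro bexI[OF _ sPF] conjI ballI impI)
    show "s^2 + 1 \<noteq> 0" using snu nunz by simp
    fix w assume w: "w \<in> PF" "w \<noteq> 0"
    then obtain y where y: "y < p" "w = of_nat y" using PF_eq by auto
    have y0: "y \<noteq> 0"
    proof
      assume "y = 0" thus False using y(2) w(2) by simp
    qed
    have ydvd: "\<not> int p dvd int y" using not_dvd_small[of y] y y0 by simp
    show "(\<exists>\<alpha>\<in>PF. \<alpha> \<noteq> 0 \<and> w = \<alpha>^2) \<or> (\<exists>\<alpha>\<in>PF. \<alpha> \<noteq> 0 \<and> w = (s^2+1) * \<alpha>^2)"
    proof (cases "QuadRes (int p) (int y)")
      case True
      then obtain b where b: "[b^2 = int y] (mod int p)" by (auto simp: QuadRes_def)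
      have "(of_int b :: 'a)^2 = w" using cong_eq[OF b] y(2) by simp
      moreover have "(of_int b :: 'a) \<noteq> 0" using calculation w(2) by auto
      ultimately show ?thesis by auto
    next
      case False
      have Ly: "[-1 = int y ^ h] (mod int p)"
      proof -
        have "Legendre (int y) (int p) = -1"
          using False ydvd by (simp add: Legendre_def Cong.cong_def mod_eq_0_iff_dvd)
        thus ?thesis using euler_criterion[OF p_prime p2, of "int y"] by (simp add: h_def)
      qed
      have "[(-1) * (-1) = int y ^ h * int \<nu>0 ^ h] (mod int p)" by (rule cong_mult[OF Ly Lnu])
      hence c1: "[1 = (int y * int \<nu>0) ^ h] (mod int p)" by (simp add: power_mult_distrib)
      have c2: "[Legendre (int y * int \<nu>0) (int p) = (int y * int \<nu>0) ^ h] (mod int p)"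
        using euler_criterion[OF p_prime p2, of "int y * int \<nu>0"] by (simp add: h_def)
      have c3: "[Legendre (int y * int \<nu>0) (int p) = 1] (mod int p)"
        using c2 cong_sym[OF c1] by (rule cong_trans)
      have prod_ndvd: "\<not> int p dvd int y * int \<nu>0"
        using ydvd nundvd prime_dvd_mult_iff[OF pp] by blast
      have qr: "QuadRes (int p) (int y * int \<nu>0)"
      proof (rule ccontr)
        assume nq: "\<not> QuadRes (int p) (int y * int \<nu>0)"
        have "Legendre (int y * int \<nu>0) (int p) = -1"
          using nq prod_ndvd by (simp add: Legendre_def Cong.cong_def mod_eq_0_iff_dvd)
        hence "[-1 = 1] (mod int p)" using c3 by simp
        hence "int p dvd 2" by (simp add: cong_iff_dvd_diff)
        hence "int p \<le> 2" by (rule zdvd_imp_le) simp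
        thus False using p2 by simp
      qed
      then obtain b where b: "[b^2 = int y * int \<nu>0] (mod int p)" by (auto simp: QuadRes_def)
      define \<nu> where "\<nu> = (of_nat \<nu>0 :: 'a)"
      have bb: "(of_int b :: 'a)^2 = w * \<nu>" using cong_eq[OF b] y(2) by (simp add: \<nu>_def)
      define \<alpha> where "\<alpha> = (of_int b :: 'a) / \<nu>"
      have aPF: "\<alpha> \<in> PF" by (simp add: \<alpha>_def \<nu>_def PF_div)
      have nz: "\<nu> \<noteq> 0" using nunz by (simp add: \<nu>_def)
      have "\<nu> * \<alpha>^2 = (of_int b)^2 / \<nu>" using nz by (simp add: \<alpha>_def power2_eq_square)
      also have "\<dots> = w" using bb nz by simp
      finally have weq: "w = (s^2 + 1) * \<alpha>^2" using snu by (simp add: \<nu>_def)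
      have "\<alpha> \<noteq> 0" using weq w(2) by auto
      thus ?thesis using aPF weq by blast
    qed
  qed
qed

end

context ffp
begin

lemma tr_zero: "tr p m (0::'a) = 0"
  using tr_smul[OF PF_0, of 0] by simp

lemma half_value:
  fixes A C :: 'a and k :: nat
  assumes cop: "coprime k m" and m3: "m \<ge> 3" and modd: "odd m"
    and s: "s \<in> PF" "s^2 + 1 \<noteq> 0"
    and dich: "\<forall>w\<in>PF. w \<noteq> 0 \<longrightarrow> (\<exists>\<alpha>\<in>PF. \<alpha> \<noteq> 0 \<and> w = \<alpha>^2) \<or> (\<exists>\<alpha>\<in>PF. \<alpha> \<noteq> 0 \<and> w = (s^2+1) * \<alpha>^2)"
  shows "(C = 0 \<and> A = 0 \<longrightarrow> (\<Sum>y\<in>{1..<p}. \<Sum>x\<in>UNIV. chi p m y (A * x^2 + C * x^(p^k+1))) = of_nat ((p - 1) * p^m))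
     \<and> (C = 0 \<and> A \<noteq> 0 \<longrightarrow> (\<Sum>y\<in>{1..<p}. \<Sum>x\<in>UNIV. chi p m y (A * x^2 + C * x^(p^k+1))) = 0)
     \<and> (C \<noteq> 0 \<longrightarrow> (\<Sum>y\<in>{1..<p}. \<Sum>x\<in>UNIV. chi p m y (A * x^2 + C * x^(p^k+1))) \<in>
          {0, of_nat ((p - 1) * p ^ ((m + 1) div 2)), - of_nat ((p - 1) * p ^ ((m + 1) div 2))})"
proof -
  interpret Q: qf p m ty "Qc k A C" "Bc k A C" by (rule qf_conc)
  define T where "T = (\<Sum>y\<in>{1..<p}. \<Sum>x\<in>UNIV. chi p m y (A * x^2 + C * x^(p^k+1)))"
  have TG: "T = (\<Sum>w\<in>PF-{0}. Q.G w)"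
  proof -
    have "T = (\<Sum>y\<in>{1..<p}. Q.G (of_nat y))"
      unfolding T_def Q.G_def by (intro sum.cong refl) (simp add: chi_psi tr_PF Qc_def)
    thus ?thesis using sum_of_nat_PF[of Q.G] by simp
  qed
  have dich': "\<And>w. w \<in> PF \<Longrightarrow> w \<noteq> 0 \<Longrightarrow> (\<exists>\<alpha>\<in>PF. \<alpha> \<noteq> 0 \<and> w = \<alpha>^2) \<or> (\<exists>\<alpha>\<in>PF. \<alpha> \<noteq> 0 \<and> w = (s^2+1) * \<alpha>^2)"
    using dich by blast
  have m2: "m \<ge> 2" using m3 by simp
  have res: "(C = 0 \<and> A = 0 \<longrightarrow> T = of_nat ((p - 1) * p^m)) \<and> (C = 0 \<and> A \<noteq> 0 \<longrightarrow> T = 0)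
     \<and> (C \<noteq> 0 \<longrightarrow> T \<in> {0, of_nat ((p - 1) * p ^ ((m + 1) div 2)), - of_nat ((p - 1) * p ^ ((m + 1) div 2))})"
  proof (cases "C = 0")
    case False
    have bound: "card Q.Rad \<le> p^2"
    proof (rule K_bound[OF cop m2 False, of Q.Rad "2 * sig k A"])
      fix u assume "u \<in> Q.Rad"
      hence "\<forall>z. Bc k A C z u = 0" by (simp add: Q.Rad_def)
      thus "sig k C * sig k (sig k u) + 2 * sig k A * sig k u + C * u = 0" by (rule Rad_sub)
    qed
    have "T \<in> {0, of_nat ((p - 1) * p ^ ((m + 1) div 2)), - of_nat ((p - 1) * p ^ ((m + 1) div 2))}"
      using Q.T_values(1)[OF s dich' bound modd] TG by simp
    thus ?thesis using False by simp
  next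
    case C0: True
    show ?thesis
    proof (cases "A = 0")
      case True
      have "Q.Rad = UNIV" unfolding Q.Rad_def by (auto simp: Bc_def C0 True tr_zero)
      hence "T = of_nat ((p - 1) * p^m)" using Q.T_zero_form TG by simp
      thus ?thesis using C0 True by simp
    next
      case False
      have "Q.Rad = {0}"
      proof
        show "Q.Rad \<subseteq> {0}"
        proof
          fix u assume "u \<in> Q.Rad"
          hence "\<forall>z. Bc k A C z u = 0" by (simp add: Q.Rad_def)
          from Rad_eq[OF this] have "2 * A * u = 0" using C0 p_ge3 by (simp add: power_0_left)
          thus "u \<in> {0}" using False two_ne0 by simp
        qed
        show "{0} \<subseteq> Q.Rad" using Q.B_zero2 by (simp add: Q.Rad_def)
      qed
      hence c1: "card Q.Rad = 1" by simp
      have "T = 0" using Q.T_values(2)[OF s dich' _ modd c1] c1 TG p_ge3 by simp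
      thus ?thesis using C0 False by simp
    qed
  qed
  thus ?thesis unfolding T_def .
qed

lemma main_ffp:
  fixes a b c :: 'a
  assumes m3: "m \<ge> 3" and modd: "odd m" and cop: "coprime k m" and lam: "\<not> QuadRes (int p) lam"
  shows "S_sum p m k lam a b c \<in>
    {0, of_nat ((p - 1) * p ^ m), of_nat (2 * (p - 1) * p ^ m),
     of_nat ((p - 1) * p ^ ((m + 1) div 2)), - of_nat ((p - 1) * p ^ ((m + 1) div 2)),
     of_nat (2 * (p - 1) * p ^ ((m + 1) div 2)), - of_nat (2 * (p - 1) * p ^ ((m + 1) div 2))}"
proof -
  obtain s where s: "s \<in> PF" "s^2 + 1 \<noteq> 0"
    and dich: "\<forall>w\<in>PF. w \<noteq> 0 \<longrightarrow> (\<exists>\<alpha>\<in>PF. \<alpha> \<noteq> 0 \<and> w = \<alpha>^2) \<or> (\<exists>\<alpha>\<in>PF. \<alpha> \<noteq> 0 \<and> w = (s^2+1) * \<alpha>^2)"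
    using nonres_setup[OF lam] by blast
  have lam0: "(of_int lam :: 'a) \<noteq> 0"
  proof
    assume "(of_int lam :: 'a) = 0"
    hence "int p dvd lam" using of_int_eq0 by simp
    hence "[0^2 = lam] (mod int p)" by (simp add: Cong.cong_def mod_eq_0_iff_dvd)
    hence "QuadRes (int p) lam" unfolding QuadRes_def by blast
    thus False using lam by simp
  qed
  define T1 where "T1 = (\<Sum>y\<in>{1..<p}. \<Sum>x\<in>UNIV. chi p m y ((a + b) * x^2 + c * x^(p^k+1)))"
  define T2 where "T2 = (\<Sum>y\<in>{1..<p}. \<Sum>x\<in>UNIV. chi p m y (((a - b) * of_int lam) * x^2 + (c * of_int lam) * x^(p^k+1)))"
  have S: "S_sum p m k lam a b c = T1 + T2" unfolding S_sum_def T1_def T2_def by (simp add: sum.distrib)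
  note H1 = half_value[OF cop m3 modd s dich, of c "a + b", folded T1_def]
  note H2 = half_value[OF cop m3 modd s dich, of "c * of_int lam" "(a - b) * of_int lam", folded T2_def]
  define X where "X = (of_nat ((p - 1) * p ^ ((m + 1) div 2)) :: complex)"
  define Y where "Y = (of_nat ((p - 1) * p ^ m) :: complex)"
  have X2: "of_nat (2 * (p - 1) * p ^ ((m + 1) div 2)) = 2 * X" by (simp add: X_def)
  have Y2: "of_nat (2 * (p - 1) * p ^ m) = 2 * Y" by (simp add: Y_def)
  have goal: "T1 + T2 \<in> {0, Y, 2 * Y, X, - X, 2 * X, - (2 * X)}"
  proof (cases "c = 0")
    case False
    hence "c * of_int lam \<noteq> 0" using lam0 by simp
    hence "T1 \<in> {0, X, - X}" "T2 \<in> {0, X, - X}" using H1 H2 False by (simp_all add: X_def)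
    thus ?thesis by auto
  next
    case c0: True
    have "T1 = (if a + b = 0 then Y else 0)" using H1 c0 by (simp add: Y_def)
    moreover have "T2 = (if (a - b) * of_int lam = 0 then Y else 0)" using H2 c0 by (simp add: Y_def)
    ultimately show ?thesis by (auto split: if_splits)
  qed
  show ?thesis unfolding S X2 Y2 using goal by (simp add: X_def Y_def)
qed

end

theorem lemma3p2:
  fixes p m k :: nat and lam :: int and a b c :: "'a::{field,finite}"
  assumes "prime p" and "odd p"
    and "card (UNIV::'a set) = p ^ m"
    and "m \<ge> 3" and "odd m"
    and "k \<ge> 1" and "even k" and "gcd m k = 1"
    and "\<not> QuadRes (int p) lam"
  shows "S_sum p m k lam a b c \<in>
    {0, of_nat ((p - 1) * p ^ m), of_nat (2 * (p - 1) * p ^ m),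
     of_nat ((p - 1) * p ^ ((m + 1) div 2)), - of_nat ((p - 1) * p ^ ((m + 1) div 2)),
     of_nat (2 * (p - 1) * p ^ ((m + 1) div 2)), - of_nat (2 * (p - 1) * p ^ ((m + 1) div 2))}"
proof -
  have m1: "m \<ge> 1" using assms(4) by simp
  have fi: "ffp TYPE('a) p m" by (rule ffp.intro) (rule assms(1), rule assms(2), rule assms(3), rule m1)
  have "gcd k m = 1" using assms(8) by (simp only: gcd.commute)
  hence cop: "coprime k m" by (rule coprime_iff_gcd_eq_1[THEN iffD2])
  show ?thesis by (rule ffp.main_ffp[OF fi assms(4) assms(5) cop assms(9)])
qed

end
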